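(* Call a matrix in $GL_n(\mathbb{F}[t])$ an elementary unit of $\mathcal{M}$ if it is of one of the following types: (i) $\sum_{i\ne a}E_{ii}+\alpha E_{aa}$ for some $\alpha\in\mathbb{F}\setminus\{0\}$ and $a\in\{1,\dots,n\}$; (ii) $I_n+t^N\alpha E_{ab}$ for some $N\ge 0$, $\alpha\in\mathbb{F}$ and $1\le a<b\le n$; (iii) $I_n+t^N\alpha E_{ab}$ for some $N>0$, $\alpha\in\mathbb{F}$ and $1\le b<a\le n$. Then every matrix in $\mathcal{M}$ can be brought into semi-reduced form by left multiplication with finitely many elementary units of $\mathcal{M}$. Consequently, every unit $M\in\mathcal{M}^\times$ of the ring $\mathcal{M}$ is a product of elementary units of $\mathcal{M}$.
   Context: Let $\mathbb{F}$ be a finite field with $q$ elements and $n\geq 2$ a divisor of $q-1$. $\mathcal{M}=\{(m_{ab})\in\mathbb{F}[t]^{n\times n}\mid m_{ab}(0)=0\text{ for }1\le b<a\le n\}$, a subring of $\mathbb{F}[t]^{n\times n}$. $E_{ab}\in\mathbb{F}^{n\times n}$ is the matrix with $1$ at position $(a,b)$ and $0$ elsewhere; $GL_n(\mathbb{F}[t])$ is the set of $n\times n$ polynomial matrices with determinant in $\mathbb{F}\setminus\{0\}$. For $M=(m_{ab})\in\mathcal{M}$ with $d_{ab}=\deg m_{ab}$ ($\deg 0=-\infty$), the degree matrix $\mathcal{D}(M)$ has entries $\mathcal{D}(M)_{ab}=nd_{ab}-a+b\in\mathbb{N}_0\cup\{-\infty\}$; a row of $\mathcal{D}(M)$ is trivial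 if all its entries are $-\infty$; $M$ is semi-reduced if the maxima of the non-trivial rows of $\mathcal{D}(M)$ lie in pairwise different columns. *)

theory Defs
  imports "Jordan_Normal_Form.Matrix" "HOL-Computational_Algebra.Polynomial"
begin

(* Indices are 0-based: row/column a in {0..<n} corresponds to a+1 in the paper.
   The degree-matrix entry n*d_ab - a + b is invariant under this shift. *)

definition in_M :: "nat \<Rightarrow> 'a::field poly mat \<Rightarrow> bool" where
  "in_M n M \<longleftrightarrow> M \<in> carrier_mat n n \<and>
     (\<forall>a<n. \<forall>b<n. b < a \<longrightarrow> poly (M $$ (a,b)) 0 = 0)"

(* entry of the degree matrix; None encodes -infinity (zero polynomial) *)
definition deg_mat :: "nat \<Rightarrow> 'a::field poly mat \<Rightarrow> nat \<Rightarrow> nat \<Rightarrow> int option" where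
  "deg_mat n M a b = (if M $$ (a,b) = 0 then None
      else Some (int n * int (degree (M $$ (a,b))) - int a + int b))"

definition nontrivial_row :: "nat \<Rightarrow> 'a::field poly mat \<Rightarrow> nat \<Rightarrow> bool" where
  "nontrivial_row n M a \<longleftrightarrow> (\<exists>b<n. deg_mat n M a b \<noteq> None)"

definition row_max_cols :: "nat \<Rightarrow> 'a::field poly mat \<Rightarrow> nat \<Rightarrow> nat set" where
  "row_max_cols n M a = {b. b < n \<and> (\<exists>v. deg_mat n M a b = Some v \<and>
      (\<forall>b'<n. \<forall>v'. deg_mat n M a b' = Some v' \<longrightarrow> v' \<le> v))}"

definition semi_reduced :: "nat \<Rightarrow> 'a::field poly mat \<Rightarrow> bool" where
  "semi_reduced n M \<longleftrightarrow> (\<forall>a<n. \<forall>a'<n. a \<noteq> a' \<longrightarrow> nontrivial_row n M a \<longrightarrow>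
      nontrivial_row n M a' \<longrightarrow> row_max_cols n M a \<inter> row_max_cols n M a' = {})"

definition E_mat :: "nat \<Rightarrow> nat \<Rightarrow> nat \<Rightarrow> 'a::field poly \<Rightarrow> 'a poly mat" where
  "E_mat n a b c = mat n n (\<lambda>(i,j). if i = a \<and> j = b then c else 0)"

definition elementary_unit :: "nat \<Rightarrow> 'a::field poly mat \<Rightarrow> bool" where
  "elementary_unit n U \<longleftrightarrow>
     (\<exists>\<alpha> a. \<alpha> \<noteq> 0 \<and> a < n \<and>
        U = mat n n (\<lambda>(i,j). if i = j then (if i = a then [:\<alpha>:] else 1) else 0))
   \<or> (\<exists>N \<alpha> a b. a < b \<and> b < n \<and> U = 1\<^sub>m n + E_mat n a b (monom \<alpha> N))
   \<or> (\<exists>N \<alpha> a b. N > 0 \<and> b < a \<and> a < n \<and> U = 1\<^sub>m n + E_mat n a b (monom \<alpha> N))"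

definition mat_prod_list :: "nat \<Rightarrow> 'a::field poly mat list \<Rightarrow> 'a poly mat" where
  "mat_prod_list n Us = foldr (\<lambda>U P. U * P) Us (1\<^sub>m n)"

end

theory Submission
  imports Defs
begin


lemma mult_entry:
  assumes "A \<in> carrier_mat n n" "B \<in> carrier_mat n n" "i < n" "j < n"
  shows "(A * B) $$ (i,j) = (\<Sum>k<n. A $$ (i,k) * B $$ (k,j))"
  using assms by (simp add: scalar_prod_def lessThan_atLeast0)

lemma E_mat_carrier[simp]: "E_mat n a b c \<in> carrier_mat n n"
  by (simp add: E_mat_def)

lemma E_entry[simp]: "i < n \<Longrightarrow> j < n \<Longrightarrow> E_mat n a b c $$ (i,j) = (if i = a \<and> j = b then c else 0)"
  by (simp add: E_mat_def)

lemma E_dims[simp]: "dim_row (E_mat n a b c) = n" "dim_col (E_mat n a b c) = n"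
  by (simp_all add: E_mat_def)

lemma oneE_entry[simp]: "i < n \<Longrightarrow> j < n \<Longrightarrow>
  (1\<^sub>m n + E_mat n a b c) $$ (i,j) = (if i = j then 1 else 0) + (if i = a \<and> j = b then c else 0)"
  by simp

lemma rowop_entry:
  fixes M :: "'a::field poly mat"
  assumes M: "M \<in> carrier_mat n n" and "a' < n" "i < n" "j < n"
  shows "((1\<^sub>m n + E_mat n a a' c) * M) $$ (i,j) = M $$ (i,j) + (if i = a then c * M $$ (a',j) else 0)"
proof -
  have "((1\<^sub>m n + E_mat n a a' c) * M) $$ (i,j) =
     (\<Sum>k<n. (if k = i then M $$ (k,j) else 0) + (if i = a then (if k = a' then c * M $$ (k,j) else 0) else 0))"
    unfolding mult_entry[OF add_carrier_mat[OF E_mat_carrier] M assms(3,4)]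
    by (rule sum.cong[OF refl]) (use assms in \<open>auto simp: distrib_right\<close>)
  also have "\<dots> = (\<Sum>k<n. (if k = i then M $$ (k,j) else 0)) + (\<Sum>k<n. (if i = a then (if k = a' then c * M $$ (k,j) else 0) else 0))"
    by (rule sum.distrib)
  also have "\<dots> = M $$ (i,j) + (if i = a then c * M $$ (a',j) else 0)"
    using assms by (simp add: sum.delta')
  finally show ?thesis .
qed

definition dg :: "nat \<Rightarrow> nat \<Rightarrow> 'a::field \<Rightarrow> 'a poly mat" where
  "dg n a \<alpha> = mat n n (\<lambda>(i,j). if i = j then (if i = a then [:\<alpha>:] else 1) else 0)"

lemma dg_carrier[simp]: "dg n a \<alpha> \<in> carrier_mat n n" by (simp add: dg_def)

lemma dg_left_entry:
  fixes M :: "'a::field poly mat"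
  assumes M: "M \<in> carrier_mat n n" and "i < n" "j < n"
  shows "(dg n a \<alpha> * M) $$ (i,j) = (if i = a then [:\<alpha>:] * M $$ (i,j) else M $$ (i,j))"
proof -
  have "(dg n a \<alpha> * M) $$ (i,j) = (\<Sum>k<n. (if k = i then (if i = a then [:\<alpha>:] else 1) * M $$ (i,j) else 0))"
    unfolding mult_entry[OF dg_carrier M assms(2,3)]
    by (rule sum.cong[OF refl]) (use assms in \<open>auto simp: dg_def\<close>)
  also have "\<dots> = (if i = a then [:\<alpha>:] else 1) * M $$ (i,j)"
    using assms by simp
  finally show ?thesis by simp
qed

lemma dg_right_entry:
  fixes M :: "'a::field poly mat"
  assumes M: "M \<in> carrier_mat n n" and "i < n" "j < n"
  shows "(M * dg n a \<alpha>) $$ (i,j) = (if j = a then M $$ (i,j) * [:\<alpha>:] else M $$ (i,j))"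
proof -
  have "(M * dg n a \<alpha>) $$ (i,j) = (\<Sum>k<n. (if k = j then M $$ (i,j) * (if j = a then [:\<alpha>:] else 1) else 0))"
    unfolding mult_entry[OF M dg_carrier assms(2,3)]
    by (rule sum.cong[OF refl]) (use assms in \<open>auto simp: dg_def\<close>)
  also have "\<dots> = M $$ (i,j) * (if j = a then [:\<alpha>:] else 1)"
    using assms by simp
  finally show ?thesis by simp
qed

lemma prod_carrier: "(\<forall>U\<in>set Us. U \<in> carrier_mat n n) \<Longrightarrow> mat_prod_list n Us \<in> carrier_mat n n"
  by (induction Us) (auto simp: mat_prod_list_def)

lemma prod_Nil[simp]: "mat_prod_list n [] = 1\<^sub>m n" by (simp add: mat_prod_list_def)
lemma prod_Cons[simp]: "mat_prod_list n (U # Us) = U * mat_prod_list n Us" by (simp add: mat_prod_list_def)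

lemma prod_append:
  assumes "\<forall>U\<in>set Us. U \<in> carrier_mat n n" "\<forall>U\<in>set Vs. U \<in> carrier_mat n n"
  shows "mat_prod_list n (Us @ Vs) = mat_prod_list n Us * mat_prod_list n Vs"
  using assms
proof (induction Us)
  case Nil
  then show ?case using prod_carrier[of Vs n] by simp
next
  case (Cons U Us)
  then have c: "U \<in> carrier_mat n n" "mat_prod_list n Us \<in> carrier_mat n n" "mat_prod_list n Vs \<in> carrier_mat n n"
    using prod_carrier[of Vs n] prod_carrier[of Us n] by auto
  show ?case using Cons by (simp add: assoc_mult_mat[OF c])
qed

lemma in_M_mult:
  fixes A B :: "'a::field poly mat"
  assumes A: "in_M n A" and B: "in_M n B"
  shows "in_M n (A * B)"
  unfolding in_M_def
proof (intro conjI allI impI)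
  have Ac: "A \<in> carrier_mat n n" and Bc: "B \<in> carrier_mat n n" using A B by (auto simp: in_M_def)
  then show "A * B \<in> carrier_mat n n" by simp
  fix a b assume ab: "a < n" "b < n" "b < a"
  have "poly ((A * B) $$ (a,b)) 0 = (\<Sum>k<n. poly (A $$ (a,k)) 0 * poly (B $$ (k,b)) 0)"
    unfolding mult_entry[OF Ac Bc ab(1,2)] by (simp add: poly_sum)
  also have "\<dots> = 0"
  proof (rule sum.neutral, rule ballI)
    fix k assume k: "k \<in> {..<n}"
    show "poly (A $$ (a,k)) 0 * poly (B $$ (k,b)) 0 = 0"
    proof (cases "k < a")
      case True then show ?thesis using A ab k by (auto simp: in_M_def)
    next
      case False then show ?thesis using B ab k by (auto simp: in_M_def)
    qed
  qed
  finally show "poly ((A * B) $$ (a,b)) 0 = 0" .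
qed

lemma in_M_one: "in_M n (1\<^sub>m n :: 'a::field poly mat)"
  by (simp add: in_M_def)

lemma elementary_unit_alt:
  "elementary_unit n U \<longleftrightarrow>
     (\<exists>\<alpha> a. \<alpha> \<noteq> 0 \<and> a < n \<and> U = dg n a \<alpha>)
   \<or> (\<exists>N \<alpha> a b. a < b \<and> b < n \<and> U = 1\<^sub>m n + E_mat n a b (monom \<alpha> N))
   \<or> (\<exists>N \<alpha> a b. N > 0 \<and> b < a \<and> a < n \<and> U = 1\<^sub>m n + E_mat n a b (monom \<alpha> N))"
  unfolding elementary_unit_def dg_def by simp

lemma elem_carrier: "elementary_unit n U \<Longrightarrow> U \<in> carrier_mat n n"
  unfolding elementary_unit_alt by auto

lemma elem_in_M:
  fixes U :: "'a::field poly mat"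
  assumes "elementary_unit n U" shows "in_M n U"
  using assms unfolding elementary_unit_alt
proof (elim disjE exE conjE)
  fix \<alpha> a assume "U = dg n a \<alpha>"
  then show "in_M n U" by (simp add: in_M_def dg_def)
next
  fix N \<alpha> a b assume "a < b" "U = 1\<^sub>m n + E_mat n a b (monom \<alpha> N)"
  then show "in_M n U" by (auto simp: in_M_def)
next
  fix N \<alpha> a b assume "0 < N" "U = 1\<^sub>m n + E_mat n a b (monom \<alpha> N)"
  then show "in_M n U" by (auto simp: in_M_def poly_monom)
qed

lemma elem_list_in_M:
  fixes Us :: "'a::field poly mat list"
  shows "(\<forall>U\<in>set Us. elementary_unit n U) \<Longrightarrow> in_M n (mat_prod_list n Us)"
proof (induction Us)
  case Nil then show ?case by (simp add: in_M_one)
next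
  case (Cons U Us)
  have "in_M n (mat_prod_list n Us)" using Cons by simp
  moreover have "in_M n U" using Cons.prems by (metis elem_in_M list.set_intros(1))
  ultimately show ?case by (simp add: in_M_mult)
qed

lemma dg_inv:
  fixes \<alpha> :: "'a::field"
  assumes "\<alpha> \<noteq> 0"
  shows "dg n a \<alpha> * dg n a (inverse \<alpha>) = 1\<^sub>m n"
  by (rule eq_matI) (auto simp: dg_left_entry assms, auto simp: dg_def assms one_pCons)

lemma E_inv:
  fixes c :: "'a::field poly"
  assumes "a \<noteq> b" "b < n"
  shows "(1\<^sub>m n + E_mat n a b c) * (1\<^sub>m n + E_mat n a b (- c)) = 1\<^sub>m n"
proof (rule eq_matI)
  fix i j assume "i < dim_row (1\<^sub>m n :: 'a poly mat)" "j < dim_col (1\<^sub>m n :: 'a poly mat)"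
  then have ij: "i < n" "j < n" by auto
  show "((1\<^sub>m n + E_mat n a b c) * (1\<^sub>m n + E_mat n a b (- c))) $$ (i, j) = 1\<^sub>m n $$ (i, j)"
    by (subst rowop_entry[of _ n]) (use assms ij in auto)
qed auto

lemma elem_inv:
  fixes U :: "'a::field poly mat"
  assumes "elementary_unit n U"
  shows "\<exists>V. elementary_unit n V \<and> U * V = 1\<^sub>m n \<and> V * U = 1\<^sub>m n"
  using assms[unfolded elementary_unit_alt]
proof (elim disjE exE conjE)
  fix \<alpha> a assume h: "\<alpha> \<noteq> 0" "a < n" "U = dg n a \<alpha>"
  show ?thesis
  proof (rule exI[of _ "dg n a (inverse \<alpha>)"], intro conjI)
    show "elementary_unit n (dg n a (inverse \<alpha>))" unfolding elementary_unit_alt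
      by (intro disjI1 exI[of _ "inverse \<alpha>"] exI[of _ a]) (use h in simp)
  qed (use h dg_inv[of \<alpha> n a] dg_inv[of "inverse \<alpha>" n a] in auto)
next
  fix N \<alpha> a b assume h: "a < b" "b < n" "U = 1\<^sub>m n + E_mat n a b (monom \<alpha> N)"
  show ?thesis
  proof (rule exI[of _ "1\<^sub>m n + E_mat n a b (monom (-\<alpha>) N)"], intro conjI)
    show "elementary_unit n (1\<^sub>m n + E_mat n a b (monom (-\<alpha>) N))" unfolding elementary_unit_alt
      by (intro disjI2 disjI1 exI[of _ N] exI[of _ "-\<alpha>"] exI[of _ a] exI[of _ b]) (use h in simp)
  qed (use h E_inv[of a b n "monom \<alpha> N"] E_inv[of a b n "monom (-\<alpha>) N"] in \<open>auto simp: minus_monom\<close>)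
next
  fix N \<alpha> a b assume h: "0 < N" "b < a" "a < n" "U = 1\<^sub>m n + E_mat n a b (monom \<alpha> N)"
  show ?thesis
  proof (rule exI[of _ "1\<^sub>m n + E_mat n a b (monom (-\<alpha>) N)"], intro conjI)
    show "elementary_unit n (1\<^sub>m n + E_mat n a b (monom (-\<alpha>) N))" unfolding elementary_unit_alt
      by (intro disjI2 disjI2 exI[of _ N] exI[of _ "-\<alpha>"] exI[of _ a] exI[of _ b]) (use h in simp)
  qed (use h E_inv[of a b n "monom \<alpha> N"] E_inv[of a b n "monom (-\<alpha>) N"] in \<open>auto simp: minus_monom\<close>)
qed



definition Dv :: "nat \<Rightarrow> nat \<Rightarrow> nat \<Rightarrow> 'a::zero poly \<Rightarrow> int" where
  "Dv n i j p = int n * int (degree p) - int i + int j"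

definition rset :: "nat \<Rightarrow> 'a::field poly mat \<Rightarrow> nat \<Rightarrow> int set" where
  "rset n M a = (\<lambda>j. Dv n a j (M $$ (a,j))) ` {j. j < n \<and> M $$ (a,j) \<noteq> 0}"

definition rmax :: "nat \<Rightarrow> 'a::field poly mat \<Rightarrow> nat \<Rightarrow> int" where
  "rmax n M a = Max (rset n M a)"

lemma Dv_nonneg:
  fixes M :: "'a::field poly mat"
  assumes "in_M n M" "i < n" "j < n" "M $$ (i,j) \<noteq> 0"
  shows "0 \<le> Dv n i j (M $$ (i,j))"
proof (cases "i \<le> j")
  case True
  have "0 \<le> int n * int (degree (M $$ (i,j)))" by simp
  then show ?thesis using True unfolding Dv_def by linarith
next
  case False
  then have "poly (M $$ (i,j)) 0 = 0" using assms by (auto simp: in_M_def)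
  then have "degree (M $$ (i,j)) \<noteq> 0"
    using assms(4) degree_0_id[of "M $$ (i,j)"] by (auto simp: poly_0_coeff_0)
  then have "int n * 1 \<le> int n * int (degree (M $$ (i,j)))" by (intro mult_left_mono) auto
  then show ?thesis using assms(2) unfolding Dv_def by linarith
qed

lemma Dv_distinct:
  assumes "j < n" "j' < n" "j \<noteq> j'"
  shows "Dv n i j p \<noteq> Dv n i j' q"
proof
  assume "Dv n i j p = Dv n i j' q"
  then have "int (n * degree p + j) = int (n * degree q + j')" by (simp add: Dv_def)
  then have "n * degree p + j = n * degree q + j'" by linarith
  then have "(n * degree p + j) mod n = (n * degree q + j') mod n" by simp
  then show False using assms by simp
qed

lemma Dv_mono: "degree p \<le> degree q \<Longrightarrow> Dv n i j p \<le> Dv n i j q"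
  unfolding Dv_def by (simp add: mult_left_mono)

lemma rset_finite: "finite (rset n M a)"
  unfolding rset_def by simp

lemma nontrivial_iff: "nontrivial_row n M a \<longleftrightarrow> (\<exists>b<n. M $$ (a,b) \<noteq> 0)"
  by (auto simp: nontrivial_row_def deg_mat_def)

lemma rmax_ge:
  "b < n \<Longrightarrow> M $$ (a,b) \<noteq> 0 \<Longrightarrow> Dv n a b (M $$ (a,b)) \<le> rmax n M a"
  unfolding rmax_def by (rule Max_ge[OF rset_finite]) (auto simp: rset_def)

lemma rmax_in:
  assumes "b < n" "M $$ (a,b) \<noteq> 0"
  shows "\<exists>b'<n. M $$ (a,b') \<noteq> 0 \<and> Dv n a b' (M $$ (a,b')) = rmax n M a"
proof -
  have "rset n M a \<noteq> {}" using assms by (auto simp: rset_def)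
  then have "rmax n M a \<in> rset n M a" unfolding rmax_def by (rule Max_in[OF rset_finite])
  then show ?thesis by (auto simp: rset_def)
qed

lemma rmax_nonneg:
  fixes M :: "'a::field poly mat"
  assumes "in_M n M" "a < n" "b < n" "M $$ (a,b) \<noteq> 0"
  shows "0 \<le> rmax n M a"
  using Dv_nonneg[OF assms] rmax_ge[OF assms(3,4)] by linarith

lemma row_max_cols_iff:
  "b \<in> row_max_cols n M a \<longleftrightarrow> b < n \<and> M $$ (a,b) \<noteq> 0 \<and> Dv n a b (M $$ (a,b)) = rmax n M a"
proof
  assume h: "b \<in> row_max_cols n M a"
  then have b: "b < n" "M $$ (a,b) \<noteq> 0" and le: "\<And>b'. b' < n \<Longrightarrow> M $$ (a,b') \<noteq> 0 \<Longrightarrow> Dv n a b' (M $$ (a,b')) \<le> Dv n a b (M $$ (a,b))"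
    by (auto simp: row_max_cols_def deg_mat_def Dv_def split: if_splits)
  obtain b' where b': "b' < n" "M $$ (a,b') \<noteq> 0" "Dv n a b' (M $$ (a,b')) = rmax n M a"
    using rmax_in[OF b] by blast
  show "b < n \<and> M $$ (a,b) \<noteq> 0 \<and> Dv n a b (M $$ (a,b)) = rmax n M a"
    using b le[OF b'(1,2)] b'(3) rmax_ge[OF b] by linarith
next
  assume h: "b < n \<and> M $$ (a,b) \<noteq> 0 \<and> Dv n a b (M $$ (a,b)) = rmax n M a"
  then show "b \<in> row_max_cols n M a"
    using rmax_ge[of _ n M a] by (auto simp: row_max_cols_def deg_mat_def Dv_def split: if_splits)
qed

lemma rmax_strict:
  assumes "b \<in> row_max_cols n M a" "j < n" "j \<noteq> b" "M $$ (a,j) \<noteq> 0"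
  shows "Dv n a j (M $$ (a,j)) < rmax n M a"
proof -
  have "Dv n a j (M $$ (a,j)) \<noteq> Dv n a b (M $$ (a,b))"
    using assms row_max_cols_iff by (metis Dv_distinct)
  then show ?thesis using assms rmax_ge[OF assms(2,4)] row_max_cols_iff[of b n M a] by auto
qed

lemma semi_strict:
  assumes "semi_reduced n M" "a < n" "a' < n" "a \<noteq> a'" "b \<in> row_max_cols n M a" "M $$ (a',b) \<noteq> 0"
  shows "Dv n a' b (M $$ (a',b)) < rmax n M a'"
proof -
  have b: "b < n" "M $$ (a,b) \<noteq> 0" using assms(5) row_max_cols_iff by auto
  have nt: "nontrivial_row n M a" "nontrivial_row n M a'" using b assms(6) by (auto simp: nontrivial_iff)
  have "b \<notin> row_max_cols n M a'"
    using assms(1) nt assms(2-5) unfolding semi_reduced_def by blast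
  then show ?thesis using rmax_ge[OF b(1) assms(6)] b assms(6) row_max_cols_iff[of b n M a'] by auto
qed



definition mu :: "nat \<Rightarrow> 'a::field poly mat \<Rightarrow> nat" where
  "mu n M = (\<Sum>a<n. if nontrivial_row n M a then nat (rmax n M a) + 1 else 0)"

lemma deg_sum_lt:
  fixes X Y :: "'a::field poly"
  assumes "X \<noteq> 0 \<Longrightarrow> Dv n a j X < R" "Y \<noteq> 0 \<Longrightarrow> Dv n a j Y < R" "X + Y \<noteq> 0"
  shows "Dv n a j (X + Y) < R"
proof (cases "X = 0")
  case True then show ?thesis using assms by simp
next
  case X: False
  show ?thesis
  proof (cases "Y = 0")
    case True then show ?thesis using assms X by simp
  next
    case False
    have "degree (X + Y) \<le> degree X \<or> degree (X + Y) \<le> degree Y"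
      using degree_add_le_max[of X Y] by linarith
    then show ?thesis using Dv_mono[of "X + Y" X n a j] Dv_mono[of "X + Y" Y n a j] assms X False by fastforce
  qed
qed

lemma step:
  fixes M :: "'a::field poly mat"
  assumes n: "0 < n" and M: "in_M n M" and aa: "a < n" "a' < n" "a \<noteq> a'"
    and ba: "b \<in> row_max_cols n M a" and ba': "b \<in> row_max_cols n M a'"
    and le: "rmax n M a' \<le> rmax n M a"
  shows "\<exists>U. elementary_unit n U \<and> in_M n (U * M) \<and> mu n (U * M) < mu n M"
proof -
  have Mc: "M \<in> carrier_mat n n" using M by (simp add: in_M_def)
  have b: "b < n" "M $$ (a,b) \<noteq> 0" "Dv n a b (M $$ (a,b)) = rmax n M a"
    using ba row_max_cols_iff by auto
  have b': "M $$ (a',b) \<noteq> 0" "Dv n a' b (M $$ (a',b)) = rmax n M a'"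
    using ba' row_max_cols_iff by auto
  define d where "d = degree (M $$ (a,b))"
  define d' where "d' = degree (M $$ (a',b))"
  define lc where "lc = lead_coeff (M $$ (a,b))"
  define lc' where "lc' = lead_coeff (M $$ (a',b))"
  have lc0: "lc \<noteq> 0" "lc' \<noteq> 0" using b b' by (auto simp: lc_def lc'_def)
  have r: "rmax n M a = int n * int d - int a + int b" "rmax n M a' = int n * int d' - int a' + int b"
    using b b' by (auto simp: Dv_def d_def d'_def)
  have "int n * int d' < int n * int (d + 1)" using r le aa by (simp add: algebra_simps)
  then have dd: "d' \<le> d" by (simp add: mult_less_cancel_left)
  have dd2: "a' < a \<Longrightarrow> d' < d"
  proof -
    assume "a' < a"
    then have "int n * int d' < int n * int d" using r le by linarith
    then show "d' < d" by (simp add: mult_less_cancel_left)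
  qed
  define N where "N = d - d'"
  define \<alpha> where "\<alpha> = - lc / lc'"
  define c where "c = monom \<alpha> N"
  define U where "U = 1\<^sub>m n + E_mat n a a' c"
  have \<alpha>0: "\<alpha> \<noteq> 0" using lc0 by (simp add: \<alpha>_def)
  have nN: "int n * int N = rmax n M a - rmax n M a' + int a - int a'"
    using r dd by (simp add: N_def of_nat_diff algebra_simps)
  have elem: "elementary_unit n U"
  proof (cases "a < a'")
    case True
    then show ?thesis unfolding elementary_unit_alt U_def c_def
      by (intro disjI2 disjI1 exI[of _ N] exI[of _ \<alpha>] exI[of _ a] exI[of _ a']) (use aa in simp)
  next
    case False
    then have "0 < N" using dd2 aa by (simp add: N_def)
    then show ?thesis unfolding elementary_unit_alt U_def c_def
      using False aa by (intro disjI2 disjI2 exI[of _ N] exI[of _ \<alpha>] exI[of _ a] exI[of _ a']) simp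
  qed
  define M2 where "M2 = U * M"
  have M2c: "M2 \<in> carrier_mat n n" unfolding M2_def U_def by (rule mult_carrier_mat[OF add_carrier_mat[OF E_mat_carrier] Mc])
  have ent: "\<And>i j. i < n \<Longrightarrow> j < n \<Longrightarrow> M2 $$ (i,j) = M $$ (i,j) + (if i = a then c * M $$ (a',j) else 0)"
    unfolding M2_def U_def by (rule rowop_entry[OF Mc aa(2)])
  have inM2: "in_M n M2"
    unfolding in_M_def
  proof (intro conjI allI impI)
    show "M2 \<in> carrier_mat n n" by (rule M2c)
    fix i j assume ij: "i < n" "j < n" "j < i"
    have p1: "poly (M $$ (i,j)) 0 = 0" using M ij by (auto simp: in_M_def)
    have p2: "i = a \<Longrightarrow> poly c 0 * poly (M $$ (a',j)) 0 = 0"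
    proof -
      assume "i = a"
      show ?thesis
      proof (cases "a < a'")
        case True then show ?thesis using M ij \<open>i = a\<close> aa by (auto simp: in_M_def)
      next
        case False
        then have "0 < N" using dd2 aa by (simp add: N_def)
        then show ?thesis by (simp add: c_def poly_monom)
      qed
    qed
    show "poly (M2 $$ (i,j)) 0 = 0" using p1 p2 ent[OF ij(1,2)] by auto
  qed
  have rowa: "\<And>j. j < n \<Longrightarrow> M2 $$ (a,j) \<noteq> 0 \<Longrightarrow> Dv n a j (M2 $$ (a,j)) < rmax n M a"
  proof -
    fix j assume j: "j < n" and nz: "M2 $$ (a,j) \<noteq> 0"
    have e: "M2 $$ (a,j) = M $$ (a,j) + c * M $$ (a',j)" using ent[OF aa(1) j] by simp
    show "Dv n a j (M2 $$ (a,j)) < rmax n M a"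
    proof (cases "j = b")
      case True
      let ?X = "M $$ (a,b)" and ?Y = "c * M $$ (a',b)"
      have cz: "coeff (?X + ?Y) k = 0" if k: "d \<le> k" for k
      proof (cases "k = d")
        case True
        have "coeff ?Y d = \<alpha> * lc'"
          using dd by (simp add: c_def coeff_monom_mult N_def lc'_def d'_def[symmetric])
        then show ?thesis using True lc0 by (simp add: lc_def d_def[symmetric] \<alpha>_def)
      next
        case False
        then have k': "d < k" using k by simp
        have "coeff ?X k = 0" using k' by (simp add: d_def coeff_eq_0)
        moreover have "coeff ?Y k = 0"
          using k' dd by (auto simp: c_def coeff_monom_mult N_def d'_def coeff_eq_0)
        ultimately show ?thesis by simp
      qed
      have nz': "?X + ?Y \<noteq> 0" using nz e True by simp
      have "degree (?X + ?Y) < d"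
      proof (rule ccontr)
        assume "\<not> degree (?X + ?Y) < d"
        then have "coeff (?X + ?Y) (degree (?X + ?Y)) = 0" using cz by simp
        then show False using nz' leading_coeff_0_iff by blast
      qed
      then have "int n * int (degree (?X + ?Y)) < int n * int d" using n by simp
      then show ?thesis using e True r by (simp add: Dv_def)
    next
      case False
      have hX: "Dv n a j (M $$ (a,j)) < rmax n M a" if "M $$ (a,j) \<noteq> 0"
        using rmax_strict[OF ba j False that] .
      have hY: "Dv n a j (c * M $$ (a',j)) < rmax n M a" if h: "c * M $$ (a',j) \<noteq> 0"
      proof -
        have nz2: "M $$ (a',j) \<noteq> 0" using h by auto
        have c0: "c \<noteq> 0" using \<alpha>0 by (simp add: c_def)
        have "degree (c * M $$ (a',j)) = N + degree (M $$ (a',j))"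
          using degree_mult_eq[OF c0 nz2] \<alpha>0 by (simp add: c_def degree_monom_eq)
        then have "Dv n a j (c * M $$ (a',j)) = int n * int N + Dv n a' j (M $$ (a',j)) + int a' - int a"
          by (simp add: Dv_def algebra_simps)
        moreover have "Dv n a' j (M $$ (a',j)) < rmax n M a'" using rmax_strict[OF ba' j False nz2] .
        ultimately show ?thesis using nN by linarith
      qed
      show ?thesis using deg_sum_lt[of "M $$ (a,j)" n a j "rmax n M a" "c * M $$ (a',j)"] hX hY nz e by simp
    qed
  qed
  have mu_lt: "mu n M2 < mu n M"
    unfolding mu_def
  proof (rule sum_strict_mono_ex1)
    have same: "(if nontrivial_row n M2 i then nat (rmax n M2 i) + 1 else 0) =
                (if nontrivial_row n M i then nat (rmax n M i) + 1 else 0)" if i: "i < n" "i \<noteq> a" for i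
    proof -
      have eq: "\<And>j. j < n \<Longrightarrow> M2 $$ (i,j) = M $$ (i,j)" using ent i by simp
      have "rset n M2 i = rset n M i" unfolding rset_def using eq
        by (auto intro!: image_cong simp: image_def) 
      then have "rmax n M2 i = rmax n M i" by (simp add: rmax_def)
      moreover have "nontrivial_row n M2 i = nontrivial_row n M i" using eq by (auto simp: nontrivial_iff)
      ultimately show ?thesis by simp
    qed
    have at_a: "(if nontrivial_row n M2 a then nat (rmax n M2 a) + 1 else 0) <
                (if nontrivial_row n M a then nat (rmax n M a) + 1 else 0)"
    proof -
      have ntM: "nontrivial_row n M a" using b by (auto simp: nontrivial_iff)
      have "0 \<le> rmax n M a" using rmax_nonneg[OF M aa(1) b(1,2)] .
      show ?thesis
      proof (cases "nontrivial_row n M2 a")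
        case True
        then obtain j where j: "j < n" "M2 $$ (a,j) \<noteq> 0" by (auto simp: nontrivial_iff)
        obtain j' where j': "j' < n" "M2 $$ (a,j') \<noteq> 0" "Dv n a j' (M2 $$ (a,j')) = rmax n M2 a"
          using rmax_in[OF j] by blast
        have "rmax n M2 a < rmax n M a" using rowa[OF j'(1,2)] j'(3) by simp
        moreover have "0 \<le> rmax n M2 a" using rmax_nonneg[OF inM2 aa(1) j] .
        ultimately show ?thesis using True ntM by simp
      qed (use ntM in simp)
    qed
    show "finite {..<n}" by simp
    show "\<forall>x\<in>{..<n}. (if nontrivial_row n M2 x then nat (rmax n M2 x) + 1 else 0) \<le>
                      (if nontrivial_row n M x then nat (rmax n M x) + 1 else 0)"
    proof
      fix x assume x: "x \<in> {..<n}"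
      show "(if nontrivial_row n M2 x then nat (rmax n M2 x) + 1 else 0) \<le>
                      (if nontrivial_row n M x then nat (rmax n M x) + 1 else 0)"
      proof (cases "x = a")
        case True show ?thesis unfolding True by (rule less_imp_le[OF at_a])
      next
        case False then show ?thesis using same[of x] x by simp
      qed
    qed
    show "\<exists>x\<in>{..<n}. (if nontrivial_row n M2 x then nat (rmax n M2 x) + 1 else 0) <
                      (if nontrivial_row n M x then nat (rmax n M x) + 1 else 0)"
      using at_a aa(1) by blast
  qed
  show ?thesis using elem inM2 mu_lt unfolding M2_def by blast
qed



lemma part1:
  fixes M :: "'a::field poly mat"
  assumes n: "0 < n"
  shows "in_M n M \<Longrightarrow> \<exists>Us. (\<forall>U\<in>set Us. elementary_unit n U) \<and> semi_reduced n (mat_prod_list n Us * M)"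
proof (induction "mu n M" arbitrary: M rule: less_induct)
  case less
  have Mc: "M \<in> carrier_mat n n" using less.prems by (simp add: in_M_def)
  show ?case
  proof (cases "semi_reduced n M")
    case True
    then show ?thesis using Mc by (intro exI[of _ "[]"]) simp
  next
    case False
    then obtain a a' b where aa: "a < n" "a' < n" "a \<noteq> a'"
      and ba: "b \<in> row_max_cols n M a" and ba': "b \<in> row_max_cols n M a'"
      unfolding semi_reduced_def by blast
    obtain U where U: "elementary_unit n U" "in_M n (U * M)" "mu n (U * M) < mu n M"
    proof (cases "rmax n M a' \<le> rmax n M a")
      case True
      then show ?thesis using step[OF n less.prems aa ba ba'] that by blast
    next
      case False
      then show ?thesis using step[OF n less.prems aa(2,1) _ ba' ba] aa(3) that by force
    qed
    obtain Us where Us: "\<forall>U\<in>set Us. elementary_unit n U" "semi_reduced n (mat_prod_list n Us * (U * M))"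
      using less.hyps[OF U(3) U(2)] by blast
    have Uc: "U \<in> carrier_mat n n" using elem_carrier[OF U(1)] .
    have Usc: "mat_prod_list n Us \<in> carrier_mat n n" using prod_carrier Us(1) elem_carrier by blast
    have "mat_prod_list n (Us @ [U]) = mat_prod_list n Us * U"
      using prod_append[of Us n "[U]"] Us(1) elem_carrier Uc by auto
    then have "mat_prod_list n (Us @ [U]) * M = mat_prod_list n Us * (U * M)"
      using Uc Usc Mc by simp
    then show ?thesis using Us U(1) by (intro exI[of _ "Us @ [U]"]) auto
  qed
qed

lemma list_inv:
  fixes Us :: "'a::field poly mat list"
  shows "(\<forall>U\<in>set Us. elementary_unit n U) \<Longrightarrow> \<exists>Vs. (\<forall>V\<in>set Vs. elementary_unit n V) \<and>
     mat_prod_list n Vs * mat_prod_list n Us = 1\<^sub>m n \<and> mat_prod_list n Us * mat_prod_list n Vs = 1\<^sub>m n"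
proof (induction Us)
  case Nil then show ?case by (intro exI[of _ "[]"]) simp
next
  case (Cons U Us)
  obtain Vs where Vs: "\<forall>V\<in>set Vs. elementary_unit n V"
     "mat_prod_list n Vs * mat_prod_list n Us = 1\<^sub>m n" "mat_prod_list n Us * mat_prod_list n Vs = 1\<^sub>m n"
    using Cons by auto
  have U: "elementary_unit n U" using Cons.prems by simp
  obtain V where V: "elementary_unit n V" "U * V = 1\<^sub>m n" "V * U = 1\<^sub>m n" using elem_inv[OF U] by blast
  have c: "U \<in> carrier_mat n n" "V \<in> carrier_mat n n" "mat_prod_list n Us \<in> carrier_mat n n"
     "mat_prod_list n Vs \<in> carrier_mat n n"
    using U V Vs Cons.prems elem_carrier prod_carrier by (auto, blast+)
  have p: "mat_prod_list n (Vs @ [V]) = mat_prod_list n Vs * V"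
    using prod_append[of Vs n "[V]"] Vs(1) V elem_carrier c by auto
  have e1: "mat_prod_list n (Vs @ [V]) * mat_prod_list n (U # Us) = 1\<^sub>m n"
  proof -
    have "mat_prod_list n (Vs @ [V]) * mat_prod_list n (U # Us) = (mat_prod_list n Vs * V) * (U * mat_prod_list n Us)"
      by (simp add: p)
    also have "\<dots> = mat_prod_list n Vs * ((V * U) * mat_prod_list n Us)"
      using c by (simp add: assoc_mult_mat[of "mat_prod_list n Vs" n n V n "U * mat_prod_list n Us" n])
    also have "\<dots> = 1\<^sub>m n" using V c Vs by simp
    finally show ?thesis .
  qed
  have e2: "mat_prod_list n (U # Us) * mat_prod_list n (Vs @ [V]) = 1\<^sub>m n"
  proof -
    have "mat_prod_list n (U # Us) * mat_prod_list n (Vs @ [V]) = (U * mat_prod_list n Us) * (mat_prod_list n Vs * V)"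
      by (simp add: p)
    also have "\<dots> = U * ((mat_prod_list n Us * mat_prod_list n Vs) * V)"
      using c by (simp add: assoc_mult_mat[of U n n "mat_prod_list n Us" n "mat_prod_list n Vs * V" n])
    also have "\<dots> = 1\<^sub>m n" using V c Vs by simp
    finally show ?thesis .
  qed
  show ?case using e1 e2 Vs V by (intro exI[of _ "Vs @ [V]"]) auto
qed



lemma unit_diag:
  fixes P Q :: "'a::field poly mat"
  assumes n: "0 < n" and P: "in_M n P" and Q: "in_M n Q" and PQ: "P * Q = 1\<^sub>m n" and QP: "Q * P = 1\<^sub>m n"
    and sr: "semi_reduced n P"
  shows "\<And>a j. a < n \<Longrightarrow> j < n \<Longrightarrow> P $$ (a,j) \<noteq> 0 \<Longrightarrow> j = a \<and> degree (P $$ (a,j)) = 0"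
    and "\<And>a. a < n \<Longrightarrow> P $$ (a,a) \<noteq> 0"
proof -
  have Pc: "P \<in> carrier_mat n n" and Qc: "Q \<in> carrier_mat n n" using P Q by (auto simp: in_M_def)
  have s1: "\<exists>k<n. P $$ (a,k) \<noteq> 0 \<and> Q $$ (k,a) \<noteq> 0" if a: "a < n" for a
  proof (rule ccontr)
    assume "\<not> ?thesis"
    then have "(\<Sum>k<n. P $$ (a,k) * Q $$ (k,a)) = 0" by (intro sum.neutral) auto
    moreover have "(P * Q) $$ (a,a) = 1" using PQ a by simp
    ultimately show False using mult_entry[OF Pc Qc a a] by simp
  qed
  define f where "f i a = Dv n i a (Q $$ (i,a)) + rmax n P a" for i a
  have key: "f i a0 = 0" if i: "i < n" and a0: "a0 < n" "Q $$ (i,a0) \<noteq> 0"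
    and mx: "\<And>a. a < n \<Longrightarrow> Q $$ (i,a) \<noteq> 0 \<Longrightarrow> f i a \<le> f i a0" for i a0
  proof -
    obtain k where "k < n" "P $$ (a0,k) \<noteq> 0" using s1[OF a0(1)] by blast
    then obtain b where b: "b < n" "P $$ (a0,b) \<noteq> 0" "Dv n a0 b (P $$ (a0,b)) = rmax n P a0"
      using rmax_in by blast
    have brow: "b \<in> row_max_cols n P a0" using b row_max_cols_iff by blast
    define t where "t k = Q $$ (i,k) * P $$ (k,b)" for k
    define D0 where "D0 = degree (t a0)"
    have ta0: "t a0 \<noteq> 0" using a0 b by (simp add: t_def)
    have D0: "int n * int D0 = f i a0 + int i - int b"
      using a0 b by (simp add: D0_def t_def f_def Dv_def degree_mult_eq algebra_simps)
    have other: "degree (t k) < D0" if k: "k < n" "k \<noteq> a0" "t k \<noteq> 0" for k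
    proof -
      have q: "Q $$ (i,k) \<noteq> 0" and p: "P $$ (k,b) \<noteq> 0" using k by (auto simp: t_def)
      have "Dv n k b (P $$ (k,b)) < rmax n P k"
        using semi_strict[OF sr a0(1) k(1) k(2)[symmetric] brow p] .
      moreover have "f i k \<le> f i a0" using mx[OF k(1) q] .
      moreover have "int n * int (degree (t k)) = Dv n i k (Q $$ (i,k)) + Dv n k b (P $$ (k,b)) + int i - int b"
        using q p by (simp add: t_def Dv_def degree_mult_eq algebra_simps)
      ultimately have "int n * int (degree (t k)) < int n * int D0" using D0 unfolding f_def by linarith
      then show ?thesis by (simp add: mult_less_cancel_left)
    qed
    have cD0: "coeff (t k) D0 = (if k = a0 then lead_coeff (t a0) else 0)" if "k < n" for k
    proof (cases "k = a0")
      case False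
      then show ?thesis using other[OF that False] by (cases "t k = 0") (auto simp: coeff_eq_0)
    qed (simp add: D0_def)
    have cbig: "coeff (t k) k' = 0" if "k < n" "D0 < k'" for k k'
    proof (cases "k = a0")
      case False
      then show ?thesis using other[OF that(1) False] that(2) by (cases "t k = 0") (auto simp: coeff_eq_0)
    qed (use that in \<open>simp add: D0_def coeff_eq_0\<close>)
    have ent: "(Q * P) $$ (i,b) = (\<Sum>k<n. t k)" unfolding t_def by (rule mult_entry[OF Qc Pc i b(1)])
    have c1: "coeff (\<Sum>k<n. t k) D0 = lead_coeff (t a0)"
    proof -
      have "(\<Sum>k<n. coeff (t k) D0) = (\<Sum>k<n. (if k = a0 then lead_coeff (t a0) else 0))"
        by (rule sum.cong[OF refl]) (simp add: cD0)
      then show ?thesis unfolding coeff_sum using a0 by simp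
    qed
    have c2: "\<forall>k'>D0. coeff (\<Sum>k<n. t k) k' = 0"
      unfolding coeff_sum by (auto intro!: sum.neutral cbig)
    have nz: "(\<Sum>k<n. t k) \<noteq> 0" using c1 ta0 by auto
    have dg: "degree (\<Sum>k<n. t k) = D0"
      using le_degree[of "\<Sum>k<n. t k" D0] degree_le[OF c2] c1 ta0 by auto
    have "(Q * P) $$ (i,b) = (if i = b then 1 else 0)" using QP i b by simp
    then have "i = b" "D0 = 0" using ent nz dg by (auto split: if_splits)
    then show ?thesis using D0 by simp
  qed
  have r0: "rmax n P a = 0" if a: "a < n" for a
  proof -
    obtain i where i: "i < n" "Q $$ (i,a) \<noteq> 0" using s1[OF a] by blast
    define S where "S = {a. a < n \<and> Q $$ (i,a) \<noteq> 0}"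
    have fin: "finite (f i ` S)" by (simp add: S_def)
    have ne: "f i ` S \<noteq> {}" using i a by (auto simp: S_def)
    obtain a0 where a0: "a0 \<in> S" "f i a0 = Max (f i ` S)" using Max_in[OF fin ne] by auto
    have mx: "\<And>a'. a' < n \<Longrightarrow> Q $$ (i,a') \<noteq> 0 \<Longrightarrow> f i a' \<le> f i a0"
      using a0(2) Max_ge[OF fin] by (auto simp: S_def)
    have "f i a0 = 0" using key[OF i(1) _ _ mx] a0(1) by (auto simp: S_def)
    then have "f i a \<le> 0" using mx[OF a i(2)] by simp
    moreover have "0 \<le> Dv n i a (Q $$ (i,a))" using Dv_nonneg[OF Q i(1) a i(2)] .
    moreover obtain k where "k < n" "P $$ (a,k) \<noteq> 0" using s1[OF a] by blast
    then have "0 \<le> rmax n P a" using rmax_nonneg[OF P a] by blast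
    ultimately show ?thesis unfolding f_def by linarith
  qed
  show "j = a \<and> degree (P $$ (a,j)) = 0" if a: "a < n" "j < n" "P $$ (a,j) \<noteq> 0" for a j
  proof -
    have "0 \<le> Dv n a j (P $$ (a,j))" using Dv_nonneg[OF P a] .
    moreover have "Dv n a j (P $$ (a,j)) \<le> 0" using rmax_ge[OF a(2,3)] r0[OF a(1)] by simp
    ultimately have e: "int (n * degree (P $$ (a,j)) + j) = int a" unfolding Dv_def by simp
    then have e': "n * degree (P $$ (a,j)) + j = a" by linarith
    have "degree (P $$ (a,j)) = 0"
    proof (rule ccontr)
      assume "degree (P $$ (a,j)) \<noteq> 0"
      then have "n * 1 \<le> n * degree (P $$ (a,j))" by (intro mult_left_mono) auto
      then show False using e' a(1) by linarith
    qed
    then show ?thesis using e' by simp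
  qed
  show "P $$ (a,a) \<noteq> 0" if a: "a < n" for a
  proof -
    obtain k where k: "k < n" "P $$ (a,k) \<noteq> 0" using s1[OF a] by blast
    have "k = a" using \<open>\<And>a j. _ \<Longrightarrow> _ \<Longrightarrow> _ \<Longrightarrow> j = a \<and> _\<close> a k by blast
    then show ?thesis using k by simp
  qed
qed



lemma dg_prod:
  fixes f :: "nat \<Rightarrow> 'a::field"
  shows "k \<le> n \<Longrightarrow> mat_prod_list n (map (\<lambda>a. dg n a (f a)) [0..<k]) =
     mat n n (\<lambda>(i,j). if i = j then (if i < k then [:f i:] else 1) else 0)"
proof (induction k)
  case 0 then show ?case by (intro eq_matI) auto
next
  case (Suc k)
  let ?X = "mat_prod_list n (map (\<lambda>a. dg n a (f a)) [0..<k])"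
  have Xc: "?X \<in> carrier_mat n n" by (rule prod_carrier) auto
  have "mat_prod_list n (map (\<lambda>a. dg n a (f a)) [0..<Suc k]) = ?X * mat_prod_list n [dg n k (f k)]"
    by (simp only: upt_Suc_append[OF le0] map_append list.map(1,2)) (rule prod_append, auto)
  also have "\<dots> = ?X * dg n k (f k)" using right_mult_one_mat[OF dg_carrier[of n k "f k"]] by simp
  also have "\<dots> = mat n n (\<lambda>(i,j). if i = j then (if i < Suc k then [:f i:] else 1) else 0)"
  proof (rule eq_matI)
    fix i j assume ij: "i < dim_row (mat n n (\<lambda>(i,j). if i = j then (if i < Suc k then [:f i:] else 1) else (0::'a poly)))"
      "j < dim_col (mat n n (\<lambda>(i,j). if i = j then (if i < Suc k then [:f i:] else 1) else (0::'a poly)))"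
    then have i: "i < n" "j < n" by auto
    show "(?X * dg n k (f k)) $$ (i,j) = mat n n (\<lambda>(i,j). if i = j then (if i < Suc k then [:f i:] else 1) else 0) $$ (i,j)"
      using dg_right_entry[OF Xc i, of k "f k"] Suc i by auto
  qed (use Xc in \<open>auto simp: dg_def\<close>)
  finally show ?case .
qed

theorem theorem3p13:
  fixes n :: nat
  assumes "n \<ge> 2" and "n dvd (card (UNIV :: ('a::{field,finite}) set) - 1)"
  shows "(\<forall>M :: 'a poly mat. in_M n M \<longrightarrow>
            (\<exists>Us. (\<forall>U\<in>set Us. elementary_unit n U) \<and>
                  semi_reduced n (mat_prod_list n Us * M)))
       \<and> (\<forall>M :: 'a poly mat. in_M n M \<and> (\<exists>M'. in_M n M' \<and> M * M' = 1\<^sub>m n \<and> M' * M = 1\<^sub>m n)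
            \<longrightarrow> (\<exists>Us. (\<forall>U\<in>set Us. elementary_unit n U) \<and> M = mat_prod_list n Us))"
proof (intro conjI allI impI)
  have n: "0 < n" using assms(1) by simp
  fix M :: "'a poly mat"
  assume "in_M n M"
  then show "\<exists>Us. (\<forall>U\<in>set Us. elementary_unit n U) \<and> semi_reduced n (mat_prod_list n Us * M)"
    using part1[OF n] by blast
next
  have n: "0 < n" using assms(1) by simp
  fix M :: "'a poly mat"
  assume h: "in_M n M \<and> (\<exists>M'. in_M n M' \<and> M * M' = 1\<^sub>m n \<and> M' * M = 1\<^sub>m n)"
  then obtain M' where M: "in_M n M" and M': "in_M n M'" "M * M' = 1\<^sub>m n" "M' * M = 1\<^sub>m n" by blast
  obtain Us where Us: "\<forall>U\<in>set Us. elementary_unit n U" "semi_reduced n (mat_prod_list n Us * M)"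
    using part1[OF n M] by blast
  obtain Vs where Vs: "\<forall>V\<in>set Vs. elementary_unit n V"
    "mat_prod_list n Vs * mat_prod_list n Us = 1\<^sub>m n" "mat_prod_list n Us * mat_prod_list n Vs = 1\<^sub>m n"
    using list_inv[OF Us(1)] by blast
  define PU where "PU = mat_prod_list n Us"
  define PV where "PV = mat_prod_list n Vs"
  define P where "P = PU * M"
  define Q where "Q = M' * PV"
  have c: "M \<in> carrier_mat n n" "M' \<in> carrier_mat n n" "PU \<in> carrier_mat n n" "PV \<in> carrier_mat n n"
    using M M' Us(1) Vs(1) elem_carrier unfolding PU_def PV_def in_M_def
    by (auto intro!: prod_carrier)
  have inP: "in_M n P" unfolding P_def PU_def by (rule in_M_mult[OF elem_list_in_M[OF Us(1)] M])
  have inQ: "in_M n Q" unfolding Q_def PV_def by (rule in_M_mult[OF M'(1) elem_list_in_M[OF Vs(1)]])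
  have QP: "Q * P = 1\<^sub>m n"
  proof -
    have "Q * P = M' * ((PV * PU) * M)"
      unfolding Q_def P_def using c by (simp add: assoc_mult_mat[of M' n n PV n "PU * M" n])
    also have "\<dots> = 1\<^sub>m n" using Vs(2) M'(3) c unfolding PU_def PV_def by simp
    finally show ?thesis .
  qed
  have PQ: "P * Q = 1\<^sub>m n"
  proof -
    have "P * Q = PU * ((M * M') * PV)"
      unfolding Q_def P_def using c by (simp add: assoc_mult_mat[of PU n n M n "M' * PV" n])
    also have "\<dots> = 1\<^sub>m n" using Vs(3) M'(2) c unfolding PU_def PV_def by simp
    finally show ?thesis .
  qed
  have sr: "semi_reduced n P" using Us(2) unfolding P_def PU_def .
  note D = unit_diag[OF n inP inQ PQ QP sr]
  have Pc: "P \<in> carrier_mat n n" using inP by (simp add: in_M_def)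
  define g where "g a = coeff (P $$ (a,a)) 0" for a
  define Ds where "Ds = map (\<lambda>a. dg n a (g a)) [0..<n]"
  have Pdiag: "P = mat_prod_list n Ds"
    unfolding Ds_def dg_prod[OF order_refl]
  proof (rule eq_matI)
    fix i j assume "i < dim_row (mat n n (\<lambda>(i,j). if i = j then (if i < n then [:g i:] else 1) else (0::'a poly)))"
      "j < dim_col (mat n n (\<lambda>(i,j). if i = j then (if i < n then [:g i:] else 1) else (0::'a poly)))"
    then have ij: "i < n" "j < n" by auto
    show "P $$ (i,j) = mat n n (\<lambda>(i,j). if i = j then (if i < n then [:g i:] else 1) else 0) $$ (i,j)"
    proof (cases "i = j")
      case True
      then have "degree (P $$ (i,i)) = 0" using D(1)[OF ij(1) ij(1) D(2)[OF ij(1)]] by simp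
      then show ?thesis using True ij by (simp add: g_def degree_0_id)
    next
      case False
      then have "P $$ (i,j) = 0" using D(1)[OF ij] by auto
      then show ?thesis using False ij by simp
    qed
  qed (use Pc in auto)
  have Ds_el: "\<forall>U\<in>set Ds. elementary_unit n U"
  proof
    fix U assume "U \<in> set Ds"
    then obtain a where a: "a < n" "U = dg n a (g a)" by (auto simp: Ds_def)
    have "P $$ (a,a) \<noteq> 0" "degree (P $$ (a,a)) = 0" using D(2)[OF a(1)] D(1)[OF a(1) a(1)] by auto
    then have "g a \<noteq> 0" unfolding g_def using degree_0_id[of "P $$ (a,a)"] by auto
    then show "elementary_unit n U" unfolding elementary_unit_alt using a by blast
  qed
  have "M = PV * P"
  proof -
    have "PV * P = (PV * PU) * M" unfolding P_def using c by simp
    then show ?thesis using Vs(2) c unfolding PU_def PV_def by simp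
  qed
  also have "\<dots> = mat_prod_list n (Vs @ Ds)"
    unfolding PV_def Pdiag using Vs(1) Ds_el elem_carrier by (intro prod_append[symmetric]) auto
  finally show "\<exists>Us. (\<forall>U\<in>set Us. elementary_unit n U) \<and> M = mat_prod_list n Us"
    using Vs(1) Ds_el by (intro exI[of _ "Vs @ Ds"]) auto
qed

end
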